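(* Every flexible C-loop is diassociative. In particular, every commutative C-loop is diassociative.
   Context: A C-loop is a loop satisfying $x(y(yz))=((xy)y)z$ for all $x,y,z$. A loop is flexible if $(xy)x=x(yx)$ for all $x,y$. A loop is diassociative if every subloop generated by two elements is a group. *)

theory Defs
  imports Main
begin

definition loop :: "('a \<Rightarrow> 'a \<Rightarrow> 'a) \<Rightarrow> 'a \<Rightarrow> bool" where
  "loop m e \<longleftrightarrow> (\<forall>x. m e x = x \<and> m x e = x)
     \<and> (\<forall>a b. \<exists>!x. m a x = b) \<and> (\<forall>a b. \<exists>!y. m y a = b)"

definition ldiv :: "('a \<Rightarrow> 'a \<Rightarrow> 'a) \<Rightarrow> 'a \<Rightarrow> 'a \<Rightarrow> 'a" where
  "ldiv m a b = (THE x. m a x = b)"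

definition rdiv :: "('a \<Rightarrow> 'a \<Rightarrow> 'a) \<Rightarrow> 'a \<Rightarrow> 'a \<Rightarrow> 'a" where
  "rdiv m b a = (THE y. m y a = b)"

definition C_loop :: "('a \<Rightarrow> 'a \<Rightarrow> 'a) \<Rightarrow> 'a \<Rightarrow> bool" where
  "C_loop m e \<longleftrightarrow> loop m e \<and> (\<forall>x y z. m x (m y (m y z)) = m (m (m x y) y) z)"

definition flexible :: "('a \<Rightarrow> 'a \<Rightarrow> 'a) \<Rightarrow> bool" where
  "flexible m \<longleftrightarrow> (\<forall>x y. m (m x y) x = m x (m y x))"

definition commutative :: "('a \<Rightarrow> 'a \<Rightarrow> 'a) \<Rightarrow> bool" where
  "commutative m \<longleftrightarrow> (\<forall>x y. m x y = m y x)"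

inductive_set subloop_gen :: "('a \<Rightarrow> 'a \<Rightarrow> 'a) \<Rightarrow> 'a \<Rightarrow> 'a \<Rightarrow> 'a \<Rightarrow> 'a set"
  for m e a b where
  gen_e: "e \<in> subloop_gen m e a b"
| gen_a: "a \<in> subloop_gen m e a b"
| gen_b: "b \<in> subloop_gen m e a b"
| gen_mult: "x \<in> subloop_gen m e a b \<Longrightarrow> y \<in> subloop_gen m e a b \<Longrightarrow> m x y \<in> subloop_gen m e a b"
| gen_ldiv: "x \<in> subloop_gen m e a b \<Longrightarrow> y \<in> subloop_gen m e a b \<Longrightarrow> ldiv m x y \<in> subloop_gen m e a b"
| gen_rdiv: "x \<in> subloop_gen m e a b \<Longrightarrow> y \<in> subloop_gen m e a b \<Longrightarrow> rdiv m x y \<in> subloop_gen m e a b"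

definition is_group_on :: "('a \<Rightarrow> 'a \<Rightarrow> 'a) \<Rightarrow> 'a \<Rightarrow> 'a set \<Rightarrow> bool" where
  "is_group_on m e S \<longleftrightarrow> e \<in> S \<and> (\<forall>x\<in>S. \<forall>y\<in>S. m x y \<in> S)
     \<and> (\<forall>x\<in>S. m e x = x \<and> m x e = x)
     \<and> (\<forall>x\<in>S. \<forall>y\<in>S. \<forall>z\<in>S. m (m x y) z = m x (m y z))
     \<and> (\<forall>x\<in>S. \<exists>y\<in>S. m x y = e \<and> m y x = e)"

definition diassociative :: "('a \<Rightarrow> 'a \<Rightarrow> 'a) \<Rightarrow> 'a \<Rightarrow> bool" where
  "diassociative m e \<longleftrightarrow> (\<forall>a b. is_group_on m e (subloop_gen m e a b))"

end

theory Submission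
  imports Defs
begin

locale fcl =
  fixes m :: "'a \<Rightarrow> 'a \<Rightarrow> 'a" (infixl \<open>\<cdot>\<close> 70) and e :: 'a
  assumes CL: "C_loop m e" and FL: "flexible m"
begin

lemma lid[simp]: "e \<cdot> x = x" and rid[simp]: "x \<cdot> e = x"
  using CL by (auto simp: C_loop_def loop_def)

lemma uniqL: "\<exists>!x. a \<cdot> x = b" and uniqR: "\<exists>!y. y \<cdot> a = b"
  using CL by (auto simp: C_loop_def loop_def)

lemma lcanc: assumes "a \<cdot> x = a \<cdot> y" shows "x = y"
proof -
  obtain z where z: "\<And>w. a \<cdot> w = a \<cdot> x \<Longrightarrow> w = z"
    using uniqL[of a "a \<cdot> x"] unfolding Ex1_def by auto
  have "x = z" by (rule z) simp
  moreover have "y = z" by (rule z) (simp add: assms)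
  ultimately show ?thesis by simp
qed

lemma rcanc: assumes "x \<cdot> a = y \<cdot> a" shows "x = y"
proof -
  obtain z where z: "\<And>w. w \<cdot> a = x \<cdot> a \<Longrightarrow> w = z"
    using uniqR[of a "x \<cdot> a"] unfolding Ex1_def by auto
  have "x = z" by (rule z) simp
  moreover have "y = z" by (rule z) (simp add: assms)
  ultimately show ?thesis by simp
qed

lemma Cid: "x \<cdot> (y \<cdot> (y \<cdot> z)) = ((x \<cdot> y) \<cdot> y) \<cdot> z"
  using CL by (auto simp: C_loop_def)

lemma flex: "(x \<cdot> y) \<cdot> x = x \<cdot> (y \<cdot> x)"
  using FL by (auto simp: flexible_def)

lemma LAP: "y \<cdot> (y \<cdot> z) = (y \<cdot> y) \<cdot> z"
  using Cid[of e y z] by simp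

lemma RAP: "(x \<cdot> y) \<cdot> y = x \<cdot> (y \<cdot> y)"
  using Cid[of x y e] by simp

definition inv :: "'a \<Rightarrow> 'a" where "inv x = ldiv m x e"

lemma rinv[simp]: "x \<cdot> inv x = e"
  unfolding inv_def ldiv_def by (rule theI', rule uniqL)

lemma linv[simp]: "inv x \<cdot> x = e"
proof -
  have "x \<cdot> (inv x \<cdot> x) = x \<cdot> e" using flex[of x "inv x"] by simp
  then show ?thesis by (rule lcanc)
qed

lemma LIP[simp]: "inv x \<cdot> (x \<cdot> v) = v"
proof -
  obtain z where z: "x \<cdot> z = v" using uniqL by blast
  have "inv x \<cdot> (x \<cdot> (x \<cdot> z)) = ((inv x \<cdot> x) \<cdot> x) \<cdot> z" by (rule Cid)
  then show ?thesis using z by simp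
qed

lemma RIP[simp]: "(w \<cdot> x) \<cdot> inv x = w"
proof -
  obtain y where y: "y \<cdot> x = w" using uniqR by blast
  have "y \<cdot> (x \<cdot> (x \<cdot> inv x)) = ((y \<cdot> x) \<cdot> x) \<cdot> inv x" by (rule Cid)
  then show ?thesis using y by simp
qed

lemma inv_inv[simp]: "inv (inv x) = x"
proof -
  have "inv x \<cdot> inv (inv x) = inv x \<cdot> x" by simp
  then show ?thesis by (rule lcanc)
qed

lemma LIP2[simp]: "x \<cdot> (inv x \<cdot> v) = v"
  using LIP[of "inv x"] by simp

lemma RIP2[simp]: "(w \<cdot> inv x) \<cdot> x = w"
  using RIP[of w "inv x"] by simp

lemma ldiv_eq: "ldiv m x y = inv x \<cdot> y"
  unfolding ldiv_def by (rule the1_equality[OF uniqL]) simp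

lemma rdiv_eq: "rdiv m y x = y \<cdot> inv x"
  unfolding rdiv_def by (rule the1_equality[OF uniqR]) simp

lemma AAIP: "inv (x \<cdot> y) = inv y \<cdot> inv x"
proof -
  have "inv (x \<cdot> y) \<cdot> x = inv (x \<cdot> y) \<cdot> ((x \<cdot> y) \<cdot> inv y)" by simp
  also have "\<dots> = inv y" by (rule LIP)
  finally have "inv (x \<cdot> y) \<cdot> x = inv y" .
  then have "(inv (x \<cdot> y) \<cdot> x) \<cdot> inv x = inv y \<cdot> inv x" by simp
  then show ?thesis by simp
qed

lemma sq_mid: "(u \<cdot> (y \<cdot> y)) \<cdot> z = u \<cdot> ((y \<cdot> y) \<cdot> z)"
  using Cid[of u y z] by (simp add: LAP RAP)

definition nuc :: "'a \<Rightarrow> bool" where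
  "nuc n \<longleftrightarrow> (\<forall>x y. (n \<cdot> x) \<cdot> y = n \<cdot> (x \<cdot> y) \<and> (x \<cdot> n) \<cdot> y = x \<cdot> (n \<cdot> y)
      \<and> (x \<cdot> y) \<cdot> n = x \<cdot> (y \<cdot> n))"

lemma mid_nuc:
  assumes a: "\<And>x y. (x \<cdot> s) \<cdot> y = x \<cdot> (s \<cdot> y)"
    and b: "\<And>x y. (x \<cdot> inv s) \<cdot> y = x \<cdot> (inv s \<cdot> y)"
  shows "nuc s"
  unfolding nuc_def
proof (intro allI conjI)
  fix x y
  show "(x \<cdot> s) \<cdot> y = x \<cdot> (s \<cdot> y)" by (rule a)
  show "(s \<cdot> x) \<cdot> y = s \<cdot> (x \<cdot> y)"
  proof -
    define d where "d = (s \<cdot> x) \<cdot> y"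
    have "y = inv (s \<cdot> x) \<cdot> d" unfolding d_def by simp
    also have "\<dots> = (inv x \<cdot> inv s) \<cdot> d" by (simp add: AAIP)
    also have "\<dots> = inv x \<cdot> (inv s \<cdot> d)" by (rule b)
    finally have "x \<cdot> y = inv s \<cdot> d" by simp
    then have "s \<cdot> (x \<cdot> y) = d" by simp
    then show ?thesis unfolding d_def by simp
  qed
  show "(x \<cdot> y) \<cdot> s = x \<cdot> (y \<cdot> s)"
  proof -
    define d where "d = (x \<cdot> y) \<cdot> s"
    have "x = (d \<cdot> inv s) \<cdot> inv y" unfolding d_def by simp
    also have "\<dots> = d \<cdot> (inv s \<cdot> inv y)" by (rule b)
    also have "\<dots> = d \<cdot> inv (y \<cdot> s)" by (simp add: AAIP)
    finally have "x \<cdot> (y \<cdot> s) = d" by simp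
    then show ?thesis unfolding d_def by simp
  qed
qed

lemma nuc_sq: "nuc (y \<cdot> y)"
  by (rule mid_nuc) (simp_all add: sq_mid AAIP)

lemma nuc_e: "nuc e" by (simp add: nuc_def)

lemma nucD: assumes "nuc n"
  shows "(n \<cdot> x) \<cdot> y = n \<cdot> (x \<cdot> y)" "(x \<cdot> n) \<cdot> y = x \<cdot> (n \<cdot> y)" "(x \<cdot> y) \<cdot> n = x \<cdot> (y \<cdot> n)"
  using assms by (auto simp: nuc_def)

lemma nuc_mult: assumes "nuc n1" "nuc n2" shows "nuc (n1 \<cdot> n2)"
  unfolding nuc_def
proof (intro allI conjI)
  fix x y
  show "(n1 \<cdot> n2 \<cdot> x) \<cdot> y = n1 \<cdot> n2 \<cdot> (x \<cdot> y)"
    by (simp add: nucD[OF assms(1)] nucD[OF assms(2)])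
  have "(x \<cdot> (n1 \<cdot> n2)) \<cdot> y = ((x \<cdot> n1) \<cdot> n2) \<cdot> y" by (simp add: nucD(2)[OF assms(1)])
  also have "\<dots> = (x \<cdot> n1) \<cdot> (n2 \<cdot> y)" by (simp add: nucD(2)[OF assms(2)])
  also have "\<dots> = x \<cdot> (n1 \<cdot> (n2 \<cdot> y))" by (simp add: nucD(2)[OF assms(1)])
  also have "\<dots> = x \<cdot> ((n1 \<cdot> n2) \<cdot> y)" by (simp add: nucD(1)[OF assms(1)])
  finally show "(x \<cdot> (n1 \<cdot> n2)) \<cdot> y = x \<cdot> (n1 \<cdot> n2 \<cdot> y)" .
  have "(x \<cdot> y) \<cdot> (n1 \<cdot> n2) = ((x \<cdot> y) \<cdot> n1) \<cdot> n2" by (simp add: nucD(2)[OF assms(1)])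
  also have "\<dots> = (x \<cdot> (y \<cdot> n1)) \<cdot> n2" by (simp add: nucD(3)[OF assms(1)])
  also have "\<dots> = x \<cdot> ((y \<cdot> n1) \<cdot> n2)" by (simp add: nucD(3)[OF assms(2)])
  also have "\<dots> = x \<cdot> (y \<cdot> (n1 \<cdot> n2))" by (simp add: nucD(2)[OF assms(1)])
  finally show "(x \<cdot> y) \<cdot> (n1 \<cdot> n2) = x \<cdot> (y \<cdot> (n1 \<cdot> n2))" .
qed

lemma nuc_inv: assumes "nuc n" shows "nuc (inv n)"
  unfolding nuc_def
proof (intro allI conjI)
  fix x y
  show "(inv n \<cdot> x) \<cdot> y = inv n \<cdot> (x \<cdot> y)"
  proof -
    have "n \<cdot> ((inv n \<cdot> x) \<cdot> y) = n \<cdot> (inv n \<cdot> (x \<cdot> y))"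
      by (simp add: nucD(1)[OF assms, symmetric])
    then show ?thesis by (rule lcanc)
  qed
  show "(x \<cdot> inv n) \<cdot> y = x \<cdot> (inv n \<cdot> y)"
    using nucD(2)[OF assms, of "x \<cdot> inv n" "inv n \<cdot> y"] by simp
  show "(x \<cdot> y) \<cdot> inv n = x \<cdot> (y \<cdot> inv n)"
  proof -
    have "(x \<cdot> (y \<cdot> inv n)) \<cdot> n = x \<cdot> y"
      by (simp add: nucD(3)[OF assms])
    then have "((x \<cdot> (y \<cdot> inv n)) \<cdot> n) \<cdot> inv n = (x \<cdot> y) \<cdot> inv n" by simp
    then have "(x \<cdot> (y \<cdot> inv n)) = (x \<cdot> y) \<cdot> inv n" by simp
    then show ?thesis by simp
  qed
qed

lemma inv_sq: "inv x = x \<cdot> (inv x \<cdot> inv x)"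
  using RAP[of x "inv x"] by simp

lemma inv_sq2: "inv x = (inv x \<cdot> inv x) \<cdot> x"
  using LAP[of "inv x" x] by simp

lemma normal: assumes "nuc n" shows "\<exists>n'. nuc n' \<and> x \<cdot> n = n' \<cdot> x"
proof -
  define w where "w = (x \<cdot> n) \<cdot> x"
  have "w \<cdot> n = (x \<cdot> n) \<cdot> (x \<cdot> n)" unfolding w_def by (simp add: nucD(3)[OF assms])
  then have "nuc (w \<cdot> n)" using nuc_sq by simp
  then have "nuc ((w \<cdot> n) \<cdot> inv n)" using nuc_mult nuc_inv assms by blast
  then have nw: "nuc w" by simp
  define t where "t = inv x \<cdot> inv x"
  have nt: "nuc t" unfolding t_def by (rule nuc_sq)
  have "(x \<cdot> n) \<cdot> inv x = (x \<cdot> n) \<cdot> (x \<cdot> t)" unfolding t_def using inv_sq by simp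
  also have "\<dots> = w \<cdot> t" unfolding w_def by (simp add: nucD(3)[OF nt])
  finally have "nuc ((x \<cdot> n) \<cdot> inv x)" using nuc_mult[OF nw nt] by simp
  moreover have "x \<cdot> n = ((x \<cdot> n) \<cdot> inv x) \<cdot> x" by simp
  ultimately show ?thesis by blast
qed

definition cong :: "'a \<Rightarrow> 'a \<Rightarrow> bool" (infix \<open>\<equiv>\<^sub>N\<close> 50) where
  "x \<equiv>\<^sub>N y \<longleftrightarrow> (\<exists>n. nuc n \<and> x = n \<cdot> y)"

lemma cong_refl[simp]: "x \<equiv>\<^sub>N x"
  unfolding cong_def using nuc_e by force

lemma cong_sym: "x \<equiv>\<^sub>N y \<Longrightarrow> y \<equiv>\<^sub>N x"
proof -
  assume "x \<equiv>\<^sub>N y"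
  then obtain n where "nuc n" "x = n \<cdot> y" unfolding cong_def by blast
  then have "nuc (inv n)" "y = inv n \<cdot> x" using nuc_inv by simp_all
  then show ?thesis unfolding cong_def by blast
qed

lemma cong_trans: "x \<equiv>\<^sub>N y \<Longrightarrow> y \<equiv>\<^sub>N z \<Longrightarrow> x \<equiv>\<^sub>N z"
proof -
  assume "x \<equiv>\<^sub>N y" "y \<equiv>\<^sub>N z"
  then obtain n n2 where "nuc n" "x = n \<cdot> y" "nuc n2" "y = n2 \<cdot> z" unfolding cong_def by blast
  then have "nuc (n \<cdot> n2)" "x = (n \<cdot> n2) \<cdot> z" using nuc_mult by (simp_all add: nucD(1))
  then show ?thesis unfolding cong_def by blast
qed

lemma cong_multR: "x \<equiv>\<^sub>N x' \<Longrightarrow> x \<cdot> y \<equiv>\<^sub>N x' \<cdot> y"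
proof -
  assume "x \<equiv>\<^sub>N x'"
  then obtain n where "nuc n" "x = n \<cdot> x'" unfolding cong_def by blast
  then have "x \<cdot> y = n \<cdot> (x' \<cdot> y)" by (simp add: nucD(1))
  then show ?thesis using \<open>nuc n\<close> unfolding cong_def by blast
qed

lemma cong_multL: assumes "y \<equiv>\<^sub>N y'" shows "x \<cdot> y \<equiv>\<^sub>N x \<cdot> y'"
proof -
  obtain n where n: "nuc n" "y = n \<cdot> y'" using assms cong_def by blast
  obtain n' where n': "nuc n'" "x \<cdot> n = n' \<cdot> x" using normal[OF n(1)] by blast
  have "x \<cdot> y = (x \<cdot> n) \<cdot> y'" using n by (simp add: nucD(2))
  also have "\<dots> = n' \<cdot> (x \<cdot> y')" using n' by (simp add: nucD(1))
  finally show ?thesis using n' cong_def by blast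
qed

lemma cong_mult: "x \<equiv>\<^sub>N x' \<Longrightarrow> y \<equiv>\<^sub>N y' \<Longrightarrow> x \<cdot> y \<equiv>\<^sub>N x' \<cdot> y'"
  by (meson cong_multL cong_multR cong_trans)

lemma cong_sq: "x \<cdot> x \<equiv>\<^sub>N e"
  unfolding cong_def by (rule exI[of _ "x \<cdot> x"]) (simp add: nuc_sq)

lemma cong_inv: "inv x \<equiv>\<^sub>N x"
  unfolding cong_def using nuc_sq inv_sq2 by blast

lemma cong_comm: "x \<cdot> y \<equiv>\<^sub>N y \<cdot> x"
proof -
  have "inv (x \<cdot> y) \<equiv>\<^sub>N y \<cdot> x" unfolding AAIP by (rule cong_mult[OF cong_inv cong_inv])
  then show ?thesis using cong_inv cong_sym cong_trans by blast
qed

definition asc :: "'a \<Rightarrow> 'a \<Rightarrow> 'a \<Rightarrow> bool" where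
  "asc p q r \<longleftrightarrow> (p \<cdot> q) \<cdot> r = p \<cdot> (q \<cdot> r)"

lemma asc1: assumes "asc p q r" "nuc n" shows "asc (n \<cdot> p) q r"
  using assms(1) unfolding asc_def by (simp add: nucD(1)[OF assms(2)])

lemma asc2: assumes "asc p q r" "nuc n" shows "asc p (n \<cdot> q) r"
proof -
  obtain n' where n': "nuc n'" "p \<cdot> n = n' \<cdot> p" using normal[OF assms(2)] by blast
  have "(p \<cdot> (n \<cdot> q)) \<cdot> r = ((p \<cdot> n) \<cdot> q) \<cdot> r" by (simp add: nucD(2)[OF assms(2)])
  also have "\<dots> = n' \<cdot> ((p \<cdot> q) \<cdot> r)" by (simp add: n'(2) nucD(1)[OF n'(1)])
  finally have "(p \<cdot> (n \<cdot> q)) \<cdot> r = n' \<cdot> ((p \<cdot> q) \<cdot> r)" .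
  also have "\<dots> = n' \<cdot> (p \<cdot> (q \<cdot> r))" using assms(1) asc_def by simp
  also have "\<dots> = (n' \<cdot> p) \<cdot> (q \<cdot> r)" by (simp add: nucD(1)[OF n'(1)])
  also have "\<dots> = p \<cdot> (n \<cdot> (q \<cdot> r))" by (simp add: n'(2)[symmetric] nucD(2)[OF assms(2)])
  also have "\<dots> = p \<cdot> ((n \<cdot> q) \<cdot> r)" by (simp add: nucD(1)[OF assms(2)])
  finally show ?thesis unfolding asc_def .
qed

lemma asc3: assumes "asc p q r" "nuc n" shows "asc p q (n \<cdot> r)"
proof -
  obtain n2 where n2: "nuc n2" "q \<cdot> n = n2 \<cdot> q" using normal[OF assms(2)] by blast
  obtain n3 where n3: "nuc n3" "p \<cdot> n2 = n3 \<cdot> p" using normal[OF n2(1)] by blast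
  have "(p \<cdot> q) \<cdot> n = p \<cdot> (n2 \<cdot> q)" by (simp add: nucD(3)[OF assms(2)] n2(2))
  also have "\<dots> = (n3 \<cdot> p) \<cdot> q" by (simp add: nucD(2)[OF n2(1), symmetric] n3(2))
  also have "\<dots> = n3 \<cdot> (p \<cdot> q)" by (simp add: nucD(1)[OF n3(1)])
  finally have pqn: "(p \<cdot> q) \<cdot> n = n3 \<cdot> (p \<cdot> q)" .
  have "(p \<cdot> q) \<cdot> (n \<cdot> r) = ((p \<cdot> q) \<cdot> n) \<cdot> r" by (simp add: nucD(2)[OF assms(2)])
  also have "\<dots> = n3 \<cdot> ((p \<cdot> q) \<cdot> r)" by (simp add: pqn nucD(1)[OF n3(1)])
  finally have "(p \<cdot> q) \<cdot> (n \<cdot> r) = n3 \<cdot> ((p \<cdot> q) \<cdot> r)" .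
  also have "\<dots> = n3 \<cdot> (p \<cdot> (q \<cdot> r))" using assms(1) asc_def by simp
  also have "\<dots> = (p \<cdot> n2) \<cdot> (q \<cdot> r)" by (simp add: n3(2) nucD(1)[OF n3(1)])
  also have "\<dots> = p \<cdot> (n2 \<cdot> (q \<cdot> r))" by (simp add: nucD(2)[OF n2(1)])
  also have "\<dots> = p \<cdot> ((q \<cdot> n) \<cdot> r)" by (simp add: n2(2) nucD(1)[OF n2(1)])
  also have "\<dots> = p \<cdot> (q \<cdot> (n \<cdot> r))" by (simp add: nucD(2)[OF assms(2)])
  finally show ?thesis unfolding asc_def .
qed

lemma asc_cong: assumes "asc p q r" "x \<equiv>\<^sub>N p" "y \<equiv>\<^sub>N q" "z \<equiv>\<^sub>N r" shows "asc x y z"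
proof -
  obtain n1 n2 n3 where "nuc n1" "x = n1 \<cdot> p" "nuc n2" "y = n2 \<cdot> q" "nuc n3" "z = n3 \<cdot> r"
    using assms(2-4) unfolding cong_def by blast
  then show ?thesis using asc1[OF asc2[OF asc3[OF assms(1)]]] by simp
qed

lemma T1: "asc x y (x \<cdot> y)"
proof -
  define u where "u = x \<cdot> y"
  have y: "y = inv x \<cdot> u" unfolding u_def by simp
  have "x \<cdot> (y \<cdot> u) = x \<cdot> ((inv x \<cdot> u) \<cdot> u)" using y by simp
  also have "\<dots> = u \<cdot> u" by (simp add: RAP)
  finally show ?thesis unfolding asc_def u_def by simp
qed

lemma asc_third: "z \<equiv>\<^sub>N x \<cdot> y \<Longrightarrow> asc x y z"
  using asc_cong[OF T1[of x y], of x y z] by simp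

lemma asc_e1: "asc e q r" and asc_e2: "asc p e r" and asc_e3: "asc p q e"
  and asc_pp: "asc p p r" and asc_qq: "asc p q q" and asc_pqp: "asc p q p"
  by (simp_all add: asc_def LAP RAP flex)

lemma cong_e_mult: "x \<equiv>\<^sub>N e \<Longrightarrow> x \<cdot> y \<equiv>\<^sub>N y"
  using cong_multR[of x e y] by simp

lemma cong_mult_e: "x \<equiv>\<^sub>N e \<Longrightarrow> y \<cdot> x \<equiv>\<^sub>N y"
  using cong_multL[of x e y] by simp

lemma c1: "a \<cdot> (a \<cdot> b) \<equiv>\<^sub>N b"
  unfolding LAP by (rule cong_e_mult[OF cong_sq])
lemma c2: "(a \<cdot> b) \<cdot> a \<equiv>\<^sub>N b"
proof -
  have "(a \<cdot> b) \<cdot> a \<equiv>\<^sub>N (b \<cdot> a) \<cdot> a" by (rule cong_multR[OF cong_comm])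
  moreover have "(b \<cdot> a) \<cdot> a \<equiv>\<^sub>N b" unfolding RAP by (rule cong_mult_e[OF cong_sq])
  ultimately show ?thesis by (rule cong_trans)
qed
lemma c3: "b \<cdot> (a \<cdot> b) \<equiv>\<^sub>N a"
proof -
  have "b \<cdot> (a \<cdot> b) \<equiv>\<^sub>N b \<cdot> (b \<cdot> a)" by (rule cong_multL[OF cong_comm])
  moreover have "b \<cdot> (b \<cdot> a) \<equiv>\<^sub>N a" unfolding LAP by (rule cong_e_mult[OF cong_sq])
  ultimately show ?thesis by (rule cong_trans)
qed
lemma c4: "(a \<cdot> b) \<cdot> b \<equiv>\<^sub>N a"
  unfolding RAP by (rule cong_mult_e[OF cong_sq])

lemma P_asc: assumes "p \<in> {e, a, b, a \<cdot> b}" "q \<in> {e, a, b, a \<cdot> b}" "r \<in> {e, a, b, a \<cdot> b}"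
  shows "asc p q r"
proof -
  have s: "\<And>x y z. x \<equiv>\<^sub>N y \<Longrightarrow> y \<equiv>\<^sub>N x" by (rule cong_sym)
  show ?thesis using assms
    apply (elim insertE emptyE)
    apply (simp_all only: asc_e1 asc_e2 asc_e3 asc_pp asc_qq asc_pqp)
    apply (simp_all only: asc_third cong_refl s[OF cong_comm] s[OF c1] s[OF c2] s[OF c3] s[OF c4])
    done
qed

definition K :: "'a \<Rightarrow> 'a \<Rightarrow> 'a set" where
  "K a b = {x. \<exists>p \<in> {e, a, b, a \<cdot> b}. x \<equiv>\<^sub>N p}"

lemma P_mult: assumes "p \<in> {e, a, b, a \<cdot> b}" "q \<in> {e, a, b, a \<cdot> b}"
  shows "\<exists>t \<in> {e, a, b, a \<cdot> b}. p \<cdot> q \<equiv>\<^sub>N t"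
  using assms
  apply (elim insertE emptyE)
  apply (simp_all add: cong_sq c1 c2 c3 c4 cong_comm)
  done

lemma K_mult: "x \<in> K a b \<Longrightarrow> y \<in> K a b \<Longrightarrow> x \<cdot> y \<in> K a b"
proof -
  assume "x \<in> K a b" "y \<in> K a b"
  then obtain p q where p: "p \<in> {e, a, b, a \<cdot> b}" "x \<equiv>\<^sub>N p" and q: "q \<in> {e, a, b, a \<cdot> b}" "y \<equiv>\<^sub>N q"
    unfolding K_def by blast
  obtain t where t: "t \<in> {e, a, b, a \<cdot> b}" "p \<cdot> q \<equiv>\<^sub>N t" using P_mult[OF p(1) q(1)] by blast
  have "x \<cdot> y \<equiv>\<^sub>N t" using cong_trans[OF cong_mult[OF p(2) q(2)] t(2)] .
  then show ?thesis using t(1) unfolding K_def by blast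
qed

lemma K_inv: "x \<in> K a b \<Longrightarrow> inv x \<in> K a b"
proof -
  assume "x \<in> K a b"
  then obtain p where p: "p \<in> {e, a, b, a \<cdot> b}" "x \<equiv>\<^sub>N p" unfolding K_def by blast
  have "inv x \<equiv>\<^sub>N p" using cong_trans[OF cong_inv p(2)] .
  then show ?thesis using p(1) unfolding K_def by blast
qed

lemma K_asc: "x \<in> K a b \<Longrightarrow> y \<in> K a b \<Longrightarrow> z \<in> K a b \<Longrightarrow> asc x y z"
proof -
  assume "x \<in> K a b" "y \<in> K a b" "z \<in> K a b"
  then obtain p q r where p: "p \<in> {e, a, b, a \<cdot> b}" "x \<equiv>\<^sub>N p" and q: "q \<in> {e, a, b, a \<cdot> b}" "y \<equiv>\<^sub>N q"
    and r: "r \<in> {e, a, b, a \<cdot> b}" "z \<equiv>\<^sub>N r"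
    unfolding K_def by blast
  show ?thesis by (rule asc_cong[OF P_asc[OF p(1) q(1) r(1)] p(2) q(2) r(2)])
qed

lemma gen_K: "x \<in> subloop_gen m e a b \<Longrightarrow> x \<in> K a b"
proof (induction rule: subloop_gen.induct)
  case gen_e then show ?case unfolding K_def by (rule CollectI, rule bexI[of _ e]) simp_all
next
  case gen_a then show ?case unfolding K_def by (rule CollectI, rule bexI[of _ a]) simp_all
next
  case gen_b then show ?case unfolding K_def by (rule CollectI, rule bexI[of _ b]) simp_all
next
  case (gen_mult x y) show ?case by (rule K_mult[OF gen_mult.IH])
next
  case (gen_ldiv x y) show ?case unfolding ldiv_eq by (rule K_mult[OF K_inv[OF gen_ldiv.IH(1)] gen_ldiv.IH(2)])
next
  case (gen_rdiv x y) show ?case unfolding rdiv_eq by (rule K_mult[OF gen_rdiv.IH(1) K_inv[OF gen_rdiv.IH(2)]])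
qed

lemma diassoc: "diassociative m e"
  unfolding diassociative_def is_group_on_def
proof (intro allI conjI ballI)
  fix a b
  let ?G = "subloop_gen m e a b"
  show "e \<in> ?G" by (rule gen_e)
  fix x assume x: "x \<in> ?G"
  show "e \<cdot> x = x" "x \<cdot> e = x" by simp_all
  show "\<exists>y\<in>?G. x \<cdot> y = e \<and> y \<cdot> x = e"
  proof
    show "ldiv m x e \<in> ?G" using x gen_e by (rule gen_ldiv)
    show "x \<cdot> ldiv m x e = e \<and> ldiv m x e \<cdot> x = e" by (simp add: ldiv_eq)
  qed
  fix y assume y: "y \<in> ?G"
  show "x \<cdot> y \<in> ?G" using x y by (rule gen_mult)
  fix z assume z: "z \<in> ?G"
  show "x \<cdot> y \<cdot> z = x \<cdot> (y \<cdot> z)" using K_asc[OF gen_K[OF x] gen_K[OF y] gen_K[OF z]]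
    unfolding asc_def .
qed

end

theorem lemma4p4:
  fixes m :: "'a \<Rightarrow> 'a \<Rightarrow> 'a" and e :: 'a
  assumes "C_loop m e"
  shows "(flexible m \<longrightarrow> diassociative m e) \<and> (commutative m \<longrightarrow> diassociative m e)"
proof -
  have "flexible m \<Longrightarrow> diassociative m e"
  proof -
    assume "flexible m"
    then have "fcl m e" using assms by (rule_tac fcl.intro)
    then show ?thesis by (rule fcl.diassoc)
  qed
  moreover have "commutative m \<Longrightarrow> flexible m"
    unfolding commutative_def flexible_def by simp
  ultimately show ?thesis by blast
qed

end
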